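(* Let $\mathcal{C}$ be a locally small category. For each object $X \in \mathcal{I}\mathcal{C}$ and objects $a, b \in \mathcal{C}$, the actions of $\pi_1$ and $\pi_2$ on morphisms give bijections $\pi_1 \colon \mathcal{I}\mathcal{C}(Ya, X) \to \mathcal{P}\mathcal{C}(Ya, X^+)$ and $\pi_2 \colon \mathcal{I}\mathcal{C}(X, Yb) \to \mathcal{P}^\dagger\mathcal{C}(X^-, Yb)$.
   Context: $\mathcal{P}\mathcal{C} \subseteq [\mathcal{C}^{op}, \mathbf{Set}]$ is the full subcategory of small presheaves (small colimits of representables), and $\mathcal{P}^\dagger\mathcal{C} = \mathcal{P}(\mathcal{C}^{op})^{op} \subseteq [\mathcal{C}, \mathbf{Set}]^{op}$. The Isbell envelope $\mathcal{I}\mathcal{C}$ has objects triples $X = (X^+, X^-, \xi^X)$ with $X^+ \in \mathcal{P}\mathcal{C}$, $X^- \in \mathcal{P}^\dagger\mathcal{C}$, and $\xi^X_{ab} \colon X^-(b) \times X^+(a) \to \mathcal{C}(a,b)$ natural in $a, b$; a morphism $X \to Y$ is a pair $(f^+, f^-)$ with $f^+ \colon X^+ \to Y^+$ in $\mathcal{P}\mathcal{C}$ and $f^- \colon X^- \to Y^-$ in $\mathcal{P}^\dagger\mathcal{C}$ (i.e. a natural transformation $Y^- \to X^-$) such that $\xi^Y_{ab}\circ(1 \times f^+_a) = \xi^X_{ab} \circ (f^-_b \times 1)$ on $Y^-(b) \times X^+(a)$ for all $a,b$. The functors $\pi_1 \colon \mathcal{I}\mathcal{C}\to\mathcal{P}\mathcal{C}$,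 $\pi_2\colon\mathcal{I}\mathcal{C}\to\mathcal{P}^\dagger\mathcal{C}$ are the projections $X\mapsto X^+$, $X\mapsto X^-$. The Yoneda embeddings are $Y \colon \mathcal{C} \to \mathcal{P}\mathcal{C}$, $c \mapsto \mathcal{C}(-,c)$; $Y \colon \mathcal{C} \to \mathcal{P}^\dagger\mathcal{C}$, $c\mapsto\mathcal{C}(c,-)$; and $Y \colon \mathcal{C} \to \mathcal{I}\mathcal{C}$, $c \mapsto (\mathcal{C}(-,c), \mathcal{C}(c,-), \circ)$ where $\circ \colon \mathcal{C}(c,b)\times\mathcal{C}(a,c)\to\mathcal{C}(a,b)$ is composition; so $\pi_1 Y = Y$ and $\pi_2 Y = Y$. *)

theory Defs
  imports Main
begin

section \<open>Categories (locally small: hom-sets are HOL sets)\<close>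

record ('o, 'm) cat =
  Obj  :: "'o set"
  Arr  :: "'m set"
  Dom  :: "'m \<Rightarrow> 'o"
  Cod  :: "'m \<Rightarrow> 'o"
  Idm  :: "'o \<Rightarrow> 'm"
  Comp :: "'m \<Rightarrow> 'm \<Rightarrow> 'm"   (* Comp C g f = g \<circ> f *)

definition hom :: "('o, 'm) cat \<Rightarrow> 'o \<Rightarrow> 'o \<Rightarrow> 'm set" where
  "hom C a b = {f \<in> Arr C. Dom C f = a \<and> Cod C f = b}"

definition is_cat :: "('o, 'm) cat \<Rightarrow> bool" where
  "is_cat C \<longleftrightarrow>
     (\<forall>f \<in> Arr C. Dom C f \<in> Obj C \<and> Cod C f \<in> Obj C) \<and>
     (\<forall>a \<in> Obj C. Idm C a \<in> hom C a a) \<and>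
     (\<forall>f \<in> Arr C. \<forall>g \<in> Arr C. Cod C f = Dom C g \<longrightarrow>
        Comp C g f \<in> hom C (Dom C f) (Cod C g)) \<and>
     (\<forall>f \<in> Arr C. Comp C f (Idm C (Dom C f)) = f \<and> Comp C (Idm C (Cod C f)) f = f) \<and>
     (\<forall>f \<in> Arr C. \<forall>g \<in> Arr C. \<forall>h \<in> Arr C. Cod C f = Dom C g \<longrightarrow> Cod C g = Dom C h \<longrightarrow>
        Comp C h (Comp C g f) = Comp C (Comp C h g) f)"

record ('o, 'm, 'v) psh =
  PObj :: "'o \<Rightarrow> 'v set"
  PMap :: "'m \<Rightarrow> 'v \<Rightarrow> 'v"

definition is_presheaf :: "('o, 'm) cat \<Rightarrow> ('o, 'm, 'v) psh \<Rightarrow> bool" where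
  "is_presheaf C F \<longleftrightarrow>
     (\<forall>f \<in> Arr C. \<forall>x \<in> PObj F (Cod C f). PMap F f x \<in> PObj F (Dom C f)) \<and>
     (\<forall>a \<in> Obj C. \<forall>x \<in> PObj F a. PMap F (Idm C a) x = x) \<and>
     (\<forall>f \<in> Arr C. \<forall>g \<in> Arr C. Cod C f = Dom C g \<longrightarrow>
        (\<forall>x \<in> PObj F (Cod C g). PMap F (Comp C g f) x = PMap F f (PMap F g x)))"

definition is_copresheaf :: "('o, 'm) cat \<Rightarrow> ('o, 'm, 'v) psh \<Rightarrow> bool" where
  "is_copresheaf C F \<longleftrightarrow>
     (\<forall>f \<in> Arr C. \<forall>x \<in> PObj F (Dom C f). PMap F f x \<in> PObj F (Cod C f)) \<and>
     (\<forall>a \<in> Obj C. \<forall>x \<in> PObj F a. PMap F (Idm C a) x = x) \<and>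
     (\<forall>f \<in> Arr C. \<forall>g \<in> Arr C. Cod C f = Dom C g \<longrightarrow>
        (\<forall>x \<in> PObj F (Dom C f). PMap F (Comp C g f) x = PMap F g (PMap F f x)))"

definition nat_psh :: "('o, 'm) cat \<Rightarrow> ('o, 'm, 'u) psh \<Rightarrow> ('o, 'm, 'v) psh
                      \<Rightarrow> ('o \<Rightarrow> 'u \<Rightarrow> 'v) \<Rightarrow> bool" where
  "nat_psh C F G \<eta> \<longleftrightarrow>
     (\<forall>c \<in> Obj C. \<forall>x \<in> PObj F c. \<eta> c x \<in> PObj G c) \<and>
     (\<forall>f \<in> Arr C. \<forall>x \<in> PObj F (Cod C f).
        \<eta> (Dom C f) (PMap F f x) = PMap G f (\<eta> (Cod C f) x)) \<and>
     (\<forall>c x. (c \<notin> Obj C \<or> x \<notin> PObj F c) \<longrightarrow> \<eta> c x = undefined)"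

definition nat_copsh :: "('o, 'm) cat \<Rightarrow> ('o, 'm, 'u) psh \<Rightarrow> ('o, 'm, 'v) psh
                      \<Rightarrow> ('o \<Rightarrow> 'u \<Rightarrow> 'v) \<Rightarrow> bool" where
  "nat_copsh C F G \<eta> \<longleftrightarrow>
     (\<forall>c \<in> Obj C. \<forall>x \<in> PObj F c. \<eta> c x \<in> PObj G c) \<and>
     (\<forall>f \<in> Arr C. \<forall>x \<in> PObj F (Dom C f).
        \<eta> (Cod C f) (PMap F f x) = PMap G f (\<eta> (Dom C f) x)) \<and>
     (\<forall>c x. (c \<notin> Obj C \<or> x \<notin> PObj F c) \<longrightarrow> \<eta> c x = undefined)"

definition yoneda_psh :: "('o, 'm) cat \<Rightarrow> 'o \<Rightarrow> ('o, 'm, 'm) psh" where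
  "yoneda_psh C c = \<lparr>PObj = (\<lambda>d. hom C d c), PMap = (\<lambda>f g. Comp C g f)\<rparr>"

definition yoneda_copsh :: "('o, 'm) cat \<Rightarrow> 'o \<Rightarrow> ('o, 'm, 'm) psh" where
  "yoneda_copsh C c = \<lparr>PObj = (\<lambda>d. hom C c d), PMap = (\<lambda>f g. Comp C f g)\<rparr>"

record ('o, 'm, 'v, 'w) isb =
  Pos :: "('o, 'm, 'v) psh"
  Neg :: "('o, 'm, 'w) psh"      (* X^- : copresheaf, object of P\<dagger>C *)
  Xi  :: "'o \<Rightarrow> 'o \<Rightarrow> 'w \<Rightarrow> 'v \<Rightarrow> 'm"   (* Xi a b : X^-(b) \<times> X^+(a) \<rightarrow> C(a,b) *)

definition is_isbell :: "('o, 'm) cat \<Rightarrow> ('o, 'm, 'v, 'w) isb \<Rightarrow> bool" where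
  "is_isbell C X \<longleftrightarrow>
     is_presheaf C (Pos X) \<and> is_copresheaf C (Neg X) \<and>
     (\<forall>a \<in> Obj C. \<forall>b \<in> Obj C. \<forall>y \<in> PObj (Neg X) b. \<forall>x \<in> PObj (Pos X) a.
        Xi X a b y x \<in> hom C a b) \<and>
     (\<forall>f \<in> Arr C. \<forall>b \<in> Obj C. \<forall>y \<in> PObj (Neg X) b. \<forall>x \<in> PObj (Pos X) (Cod C f).
        Xi X (Dom C f) b y (PMap (Pos X) f x) = Comp C (Xi X (Cod C f) b y x) f) \<and>
     (\<forall>g \<in> Arr C. \<forall>a \<in> Obj C. \<forall>y \<in> PObj (Neg X) (Dom C g). \<forall>x \<in> PObj (Pos X) a.
        Xi X a (Cod C g) (PMap (Neg X) g y) x = Comp C g (Xi X a (Dom C g) y x))"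

text \<open>Morphisms X \<rightarrow> Y in IC: pairs (f+, f-), f+ : X^+ \<Rightarrow> Y^+ and f- a natural
  transformation Y^- \<Rightarrow> X^- of copresheaves (a morphism X^- \<rightarrow> Y^- in P\<dagger>C).\<close>
definition isb_hom :: "('o, 'm) cat \<Rightarrow> ('o, 'm, 'v, 'w) isb \<Rightarrow> ('o, 'm, 'v2, 'w2) isb
    \<Rightarrow> (('o \<Rightarrow> 'v \<Rightarrow> 'v2) \<times> ('o \<Rightarrow> 'w2 \<Rightarrow> 'w)) set" where
  "isb_hom C X Y = {(fp, fm).
     nat_psh C (Pos X) (Pos Y) fp \<and> nat_copsh C (Neg Y) (Neg X) fm \<and>
     (\<forall>a \<in> Obj C. \<forall>b \<in> Obj C. \<forall>y \<in> PObj (Neg Y) b. \<forall>x \<in> PObj (Pos X) a.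
        Xi Y a b y (fp a x) = Xi X a b (fm b y) x)}"

definition yoneda_isb :: "('o, 'm) cat \<Rightarrow> 'o \<Rightarrow> ('o, 'm, 'm, 'm) isb" where
  "yoneda_isb C c = \<lparr>Pos = yoneda_psh C c, Neg = yoneda_copsh C c,
                     Xi = (\<lambda>a b g f. Comp C g f)\<rparr>"

end

theory Submission
  imports Defs
begin

lemma catD:
  assumes "is_cat C"
  shows cat_id: "a \<in> Obj C \<Longrightarrow> Idm C a \<in> hom C a a"
    and cat_obj: "f \<in> Arr C \<Longrightarrow> Dom C f \<in> Obj C \<and> Cod C f \<in> Obj C"
    and cat_idr: "f \<in> Arr C \<Longrightarrow> Comp C f (Idm C (Dom C f)) = f"
    and cat_idl: "f \<in> Arr C \<Longrightarrow> Comp C (Idm C (Cod C f)) f = f"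
  using assms unfolding is_cat_def by auto

lemma part1:
  fixes C :: "('o, 'm) cat" and X :: "('o, 'm, 'v, 'w) isb"
  assumes C: "is_cat C" and X: "is_isbell C X" and a: "a \<in> Obj C"
  shows "bij_betw fst (isb_hom C (yoneda_isb C a) X)
                      {\<eta>. nat_psh C (yoneda_psh C a) (Pos X) \<eta>}"
proof -
  have ida: "Idm C a \<in> hom C a a" using cat_id[OF C a] .
  have XP: "is_presheaf C (Pos X)" and XN: "is_copresheaf C (Neg X)"
    and Xh: "\<And>a b y x. a \<in> Obj C \<Longrightarrow> b \<in> Obj C \<Longrightarrow> y \<in> PObj (Neg X) b \<Longrightarrow> x \<in> PObj (Pos X) a \<Longrightarrow>
        Xi X a b y x \<in> hom C a b"
    and X1: "\<And>f b y x. f \<in> Arr C \<Longrightarrow> b \<in> Obj C \<Longrightarrow> y \<in> PObj (Neg X) b \<Longrightarrow> x \<in> PObj (Pos X) (Cod C f) \<Longrightarrow>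
        Xi X (Dom C f) b y (PMap (Pos X) f x) = Comp C (Xi X (Cod C f) b y x) f"
    and X2: "\<And>g a y x. g \<in> Arr C \<Longrightarrow> a \<in> Obj C \<Longrightarrow> y \<in> PObj (Neg X) (Dom C g) \<Longrightarrow> x \<in> PObj (Pos X) a \<Longrightarrow>
        Xi X a (Cod C g) (PMap (Neg X) g y) x = Comp C g (Xi X a (Dom C g) y x)"
    using X unfolding is_isbell_def by blast+
  have NX: "\<And>g y. g \<in> Arr C \<Longrightarrow> y \<in> PObj (Neg X) (Dom C g) \<Longrightarrow> PMap (Neg X) g y \<in> PObj (Neg X) (Cod C g)"
    using XN unfolding is_copresheaf_def by blast
  have det: "fm = (\<lambda>b' y. if b' \<in> Obj C \<and> y \<in> PObj (Neg X) b' then Xi X a b' y (fp a (Idm C a)) else undefined)"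
    if h: "(fp, fm) \<in> isb_hom C (yoneda_isb C a) X" for fp fm
  proof (intro ext)
    fix b' y
    have nc: "nat_copsh C (Neg X) (yoneda_copsh C a) fm"
      and cp: "\<forall>a' \<in> Obj C. \<forall>b \<in> Obj C. \<forall>y \<in> PObj (Neg X) b. \<forall>x \<in> hom C a' a.
        Xi X a' b y (fp a' x) = Comp C (fm b y) x"
      using h unfolding isb_hom_def yoneda_isb_def yoneda_psh_def by auto
    show "fm b' y = (if b' \<in> Obj C \<and> y \<in> PObj (Neg X) b' then Xi X a b' y (fp a (Idm C a)) else undefined)"
    proof (cases "b' \<in> Obj C \<and> y \<in> PObj (Neg X) b'")
      case True
      have "fm b' y \<in> hom C a b'" using nc True unfolding nat_copsh_def yoneda_copsh_def by auto
      hence "Comp C (fm b' y) (Idm C a) = fm b' y" using cat_idr[OF C, of "fm b' y"] unfolding hom_def by auto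
      then show ?thesis using cp a ida True by auto
    next
      case False
      then show ?thesis using nc unfolding nat_copsh_def by auto
    qed
  qed
  show ?thesis unfolding bij_betw_def
  proof
    show "inj_on fst (isb_hom C (yoneda_isb C a) X)"
    proof (rule inj_onI)
      fix p q assume p: "p \<in> isb_hom C (yoneda_isb C a) X" and q: "q \<in> isb_hom C (yoneda_isb C a) X"
        and e: "fst p = fst q"
      obtain fp fm where pp: "p = (fp, fm)" by fastforce
      obtain gp gm where qq: "q = (gp, gm)" by fastforce
      show "p = q" using det[of fp fm] det[of gp gm] p q e pp qq by auto
    qed
    show "fst ` isb_hom C (yoneda_isb C a) X = {\<eta>. nat_psh C (yoneda_psh C a) (Pos X) \<eta>}"
    proof
      show "fst ` isb_hom C (yoneda_isb C a) X \<subseteq> {\<eta>. nat_psh C (yoneda_psh C a) (Pos X) \<eta>}"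
        unfolding isb_hom_def yoneda_isb_def by auto
    next
      show "{\<eta>. nat_psh C (yoneda_psh C a) (Pos X) \<eta>} \<subseteq> fst ` isb_hom C (yoneda_isb C a) X"
      proof
        fix fp assume "fp \<in> {\<eta>. nat_psh C (yoneda_psh C a) (Pos X) \<eta>}"
        hence np: "nat_psh C (yoneda_psh C a) (Pos X) fp" by simp
        define x0 where "x0 = fp a (Idm C a)"
        have x0: "x0 \<in> PObj (Pos X) a" using np a ida unfolding nat_psh_def yoneda_psh_def x0_def by auto
        have npn: "\<And>f x. f \<in> Arr C \<Longrightarrow> x \<in> hom C (Cod C f) a \<Longrightarrow> fp (Dom C f) (Comp C x f) = PMap (Pos X) f (fp (Cod C f) x)"
          using np unfolding nat_psh_def yoneda_psh_def by auto
        define fm where "fm = (\<lambda>b' y. if b' \<in> Obj C \<and> y \<in> PObj (Neg X) b' then Xi X a b' y x0 else undefined)"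
        have c1: "\<forall>c \<in> Obj C. \<forall>y \<in> PObj (Neg X) c. fm c y \<in> hom C a c"
          using Xh[OF a _ _ x0] unfolding fm_def by auto
        have c2: "\<forall>f \<in> Arr C. \<forall>y \<in> PObj (Neg X) (Dom C f). fm (Cod C f) (PMap (Neg X) f y) = Comp C f (fm (Dom C f) y)"
        proof (intro ballI)
          fix f y assume f: "f \<in> Arr C" and y: "y \<in> PObj (Neg X) (Dom C f)"
          have o: "Dom C f \<in> Obj C" "Cod C f \<in> Obj C" using cat_obj[OF C f] by auto
          show "fm (Cod C f) (PMap (Neg X) f y) = Comp C f (fm (Dom C f) y)"
            unfolding fm_def using o y NX[OF f y] X2[OF f a y x0] by auto
        qed
        have c3: "\<forall>c x. (c \<notin> Obj C \<or> x \<notin> PObj (Neg X) c) \<longrightarrow> fm c x = undefined"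
          unfolding fm_def by auto
        have "nat_copsh C (Neg X) (yoneda_copsh C a) fm"
          unfolding nat_copsh_def yoneda_copsh_def using c1 c2 c3 by simp
        moreover have "\<forall>a' \<in> Obj C. \<forall>b \<in> Obj C. \<forall>y \<in> PObj (Neg X) b. \<forall>x \<in> hom C a' a.
            Xi X a' b y (fp a' x) = Comp C (fm b y) x"
        proof (intro ballI)
          fix a' b y x assume a': "a' \<in> Obj C" and b: "b \<in> Obj C" and y: "y \<in> PObj (Neg X) b" and x: "x \<in> hom C a' a"
          have xA: "x \<in> Arr C" "Dom C x = a'" "Cod C x = a" using x unfolding hom_def by auto
          have "Comp C (Idm C a) x = x" using cat_idl[OF C xA(1)] xA by simp
          hence "fp a' x = PMap (Pos X) x x0" using npn[OF xA(1), of "Idm C a"] ida xA unfolding x0_def by simp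
          thus "Xi X a' b y (fp a' x) = Comp C (fm b y) x"
            using X1[OF xA(1) b y] xA x0 b y unfolding fm_def by simp
        qed
        ultimately have "(fp, fm) \<in> isb_hom C (yoneda_isb C a) X"
          using np unfolding isb_hom_def yoneda_isb_def yoneda_psh_def by simp
        thus "fp \<in> fst ` isb_hom C (yoneda_isb C a) X" by force
      qed
    qed
  qed
qed

lemma part2:
  fixes C :: "('o, 'm) cat" and X :: "('o, 'm, 'v, 'w) isb"
  assumes C: "is_cat C" and X: "is_isbell C X" and b: "b \<in> Obj C"
  shows "bij_betw snd (isb_hom C X (yoneda_isb C b))
                      {\<eta>. nat_copsh C (yoneda_copsh C b) (Neg X) \<eta>}"
proof -
  have idb: "Idm C b \<in> hom C b b" using cat_id[OF C b] .
  have XP: "is_presheaf C (Pos X)" and XN: "is_copresheaf C (Neg X)"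
    and Xh: "\<And>a b y x. a \<in> Obj C \<Longrightarrow> b \<in> Obj C \<Longrightarrow> y \<in> PObj (Neg X) b \<Longrightarrow> x \<in> PObj (Pos X) a \<Longrightarrow>
        Xi X a b y x \<in> hom C a b"
    and X1: "\<And>f b y x. f \<in> Arr C \<Longrightarrow> b \<in> Obj C \<Longrightarrow> y \<in> PObj (Neg X) b \<Longrightarrow> x \<in> PObj (Pos X) (Cod C f) \<Longrightarrow>
        Xi X (Dom C f) b y (PMap (Pos X) f x) = Comp C (Xi X (Cod C f) b y x) f"
    and X2: "\<And>g a y x. g \<in> Arr C \<Longrightarrow> a \<in> Obj C \<Longrightarrow> y \<in> PObj (Neg X) (Dom C g) \<Longrightarrow> x \<in> PObj (Pos X) a \<Longrightarrow>
        Xi X a (Cod C g) (PMap (Neg X) g y) x = Comp C g (Xi X a (Dom C g) y x)"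
    using X unfolding is_isbell_def by blast+
  have PX: "\<And>f x. f \<in> Arr C \<Longrightarrow> x \<in> PObj (Pos X) (Cod C f) \<Longrightarrow> PMap (Pos X) f x \<in> PObj (Pos X) (Dom C f)"
    using XP unfolding is_presheaf_def by blast
  have det: "fp = (\<lambda>a' x. if a' \<in> Obj C \<and> x \<in> PObj (Pos X) a' then Xi X a' b (fm b (Idm C b)) x else undefined)"
    if h: "(fp, fm) \<in> isb_hom C X (yoneda_isb C b)" for fp fm
  proof (intro ext)
    fix a' x
    have nc: "nat_psh C (Pos X) (yoneda_psh C b) fp"
      and cp: "\<forall>a' \<in> Obj C. \<forall>b' \<in> Obj C. \<forall>y \<in> hom C b b'. \<forall>x \<in> PObj (Pos X) a'.
        Comp C y (fp a' x) = Xi X a' b' (fm b' y) x"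
      using h unfolding isb_hom_def yoneda_isb_def yoneda_copsh_def by auto
    show "fp a' x = (if a' \<in> Obj C \<and> x \<in> PObj (Pos X) a' then Xi X a' b (fm b (Idm C b)) x else undefined)"
    proof (cases "a' \<in> Obj C \<and> x \<in> PObj (Pos X) a'")
      case True
      have "fp a' x \<in> hom C a' b" using nc True unfolding nat_psh_def yoneda_psh_def by auto
      hence "Comp C (Idm C b) (fp a' x) = fp a' x" using cat_idl[OF C, of "fp a' x"] unfolding hom_def by auto
      then show ?thesis using cp b idb True by auto
    next
      case False
      then show ?thesis using nc unfolding nat_psh_def by auto
    qed
  qed
  show ?thesis unfolding bij_betw_def
  proof
    show "inj_on snd (isb_hom C X (yoneda_isb C b))"
    proof (rule inj_onI)
      fix p q assume p: "p \<in> isb_hom C X (yoneda_isb C b)" and q: "q \<in> isb_hom C X (yoneda_isb C b)"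
        and e: "snd p = snd q"
      obtain fp fm where pp: "p = (fp, fm)" by fastforce
      obtain gp gm where qq: "q = (gp, gm)" by fastforce
      show "p = q" using det[of fp fm] det[of gp gm] p q e pp qq by auto
    qed
    show "snd ` isb_hom C X (yoneda_isb C b) = {\<eta>. nat_copsh C (yoneda_copsh C b) (Neg X) \<eta>}"
    proof
      show "snd ` isb_hom C X (yoneda_isb C b) \<subseteq> {\<eta>. nat_copsh C (yoneda_copsh C b) (Neg X) \<eta>}"
        unfolding isb_hom_def yoneda_isb_def by auto
    next
      show "{\<eta>. nat_copsh C (yoneda_copsh C b) (Neg X) \<eta>} \<subseteq> snd ` isb_hom C X (yoneda_isb C b)"
      proof
        fix fm assume "fm \<in> {\<eta>. nat_copsh C (yoneda_copsh C b) (Neg X) \<eta>}"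
        hence np: "nat_copsh C (yoneda_copsh C b) (Neg X) fm" by simp
        define y0 where "y0 = fm b (Idm C b)"
        have y0: "y0 \<in> PObj (Neg X) b" using np b idb unfolding nat_copsh_def yoneda_copsh_def y0_def by auto
        have npn: "\<And>f y. f \<in> Arr C \<Longrightarrow> y \<in> hom C b (Dom C f) \<Longrightarrow> fm (Cod C f) (Comp C f y) = PMap (Neg X) f (fm (Dom C f) y)"
          using np unfolding nat_copsh_def yoneda_copsh_def by auto
        define fp where "fp = (\<lambda>a' x. if a' \<in> Obj C \<and> x \<in> PObj (Pos X) a' then Xi X a' b y0 x else undefined)"
        have c1: "\<forall>c \<in> Obj C. \<forall>x \<in> PObj (Pos X) c. fp c x \<in> hom C c b"
          using Xh[OF _ b y0] unfolding fp_def by auto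
        have c2: "\<forall>f \<in> Arr C. \<forall>x \<in> PObj (Pos X) (Cod C f). fp (Dom C f) (PMap (Pos X) f x) = Comp C (fp (Cod C f) x) f"
        proof (intro ballI)
          fix f x assume f: "f \<in> Arr C" and x: "x \<in> PObj (Pos X) (Cod C f)"
          have o: "Dom C f \<in> Obj C" "Cod C f \<in> Obj C" using cat_obj[OF C f] by auto
          show "fp (Dom C f) (PMap (Pos X) f x) = Comp C (fp (Cod C f) x) f"
            unfolding fp_def using o x PX[OF f x] X1[OF f b y0 x] by auto
        qed
        have c3: "\<forall>c x. (c \<notin> Obj C \<or> x \<notin> PObj (Pos X) c) \<longrightarrow> fp c x = undefined"
          unfolding fp_def by auto
        have "nat_psh C (Pos X) (yoneda_psh C b) fp"
          unfolding nat_psh_def yoneda_psh_def using c1 c2 c3 by simp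
        moreover have "\<forall>a' \<in> Obj C. \<forall>b' \<in> Obj C. \<forall>y \<in> hom C b b'. \<forall>x \<in> PObj (Pos X) a'.
            Comp C y (fp a' x) = Xi X a' b' (fm b' y) x"
        proof (intro ballI)
          fix a' b' y x assume a': "a' \<in> Obj C" and b': "b' \<in> Obj C" and y: "y \<in> hom C b b'" and x: "x \<in> PObj (Pos X) a'"
          have yA: "y \<in> Arr C" "Dom C y = b" "Cod C y = b'" using y unfolding hom_def by auto
          have "Comp C y (Idm C b) = y" using cat_idr[OF C yA(1)] yA by simp
          hence "fm b' y = PMap (Neg X) y y0" using npn[OF yA(1), of "Idm C b"] idb yA unfolding y0_def by simp
          thus "Comp C y (fp a' x) = Xi X a' b' (fm b' y) x"
            using X2[OF yA(1) a'] yA y0 a' x unfolding fp_def by simp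
        qed
        ultimately have "(fp, fm) \<in> isb_hom C X (yoneda_isb C b)"
          using np unfolding isb_hom_def yoneda_isb_def yoneda_copsh_def by simp
        thus "fm \<in> snd ` isb_hom C X (yoneda_isb C b)" by force
      qed
    qed
  qed
qed

theorem lemma3p2:
  fixes C :: "('o, 'm) cat" and X :: "('o, 'm, 'v, 'w) isb"
  assumes "is_cat C" and "is_isbell C X" and "a \<in> Obj C" and "b \<in> Obj C"
  shows "bij_betw fst (isb_hom C (yoneda_isb C a) X)
                      {\<eta>. nat_psh C (yoneda_psh C a) (Pos X) \<eta>}
       \<and> bij_betw snd (isb_hom C X (yoneda_isb C b))
                      {\<eta>. nat_copsh C (yoneda_copsh C b) (Neg X) \<eta>}"
  using part1[OF assms(1,2,3)] part2[OF assms(1,2,4)] by simp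

end
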